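(* Let $k=2r$ with $r\geq2$ and $G=BS(1,k)$. Let $c_0(n)$ be the number of conjugacy classes of $G$ contained in the subgroup $\mathbb{Z}[1/k]$ whose length with respect to $\{a,t\}$ is $n$. Then the growth rate $\limsup_n c_0(n)^{1/n}$ of these conjugacy classes lies in the open interval $(\frac{4}{3},2)$.
   Context: $BS(1,k)=\langle a,t\mid tat^{-1}=a^k\rangle\cong \mathbb{Z}[1/k]\rtimes\mathbb{Z}$ via $a\mapsto(1,0)$, $t\mapsto(0,1)$, with the generator of $\mathbb{Z}$ acting by multiplication by $k$; $\mathbb{Z}[1/k]=\{(x,0)\}$ is a normal subgroup. The length of a conjugacy class is the minimal word length of its elements. The growth rate is the reciprocal of the radius of convergence of $\sum c_0(n)z^n$. *)

theory Defs
  imports "HOL-Analysis.Analysis"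
begin

text \<open>Concrete model of BS(1,k) = Z[1/k] \<rtimes> Z: elements are pairs (x, m) with
  x in Z[1/k] (as rationals) and m an integer; (x,m)(y,n) = (x + k^m y, m + n).
  Then a = (1,0), t = (0,1).\<close>

definition Zk :: "nat \<Rightarrow> rat set" where
  "Zk k = {of_int a / (of_nat k) ^ j | a j. True}"

definition BS :: "nat \<Rightarrow> (rat \<times> int) set" where
  "BS k = Zk k \<times> (UNIV :: int set)"

definition bs_mult :: "nat \<Rightarrow> rat \<times> int \<Rightarrow> rat \<times> int \<Rightarrow> rat \<times> int" where
  "bs_mult k g h = (fst g + (of_nat k) powi (snd g) * fst h, snd g + snd h)"

definition bs_inv :: "nat \<Rightarrow> rat \<times> int \<Rightarrow> rat \<times> int" where
  "bs_inv k g = (- ((of_nat k) powi (- snd g)) * fst g, - snd g)"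

definition bs_gens :: "(rat \<times> int) set" where
  "bs_gens = {(1,0), (-1,0), (0,1), (0,-1)}"

definition bs_eval :: "nat \<Rightarrow> (rat \<times> int) list \<Rightarrow> rat \<times> int" where
  "bs_eval k w = foldr (bs_mult k) w (0,0)"

definition word_length :: "nat \<Rightarrow> rat \<times> int \<Rightarrow> nat" where
  "word_length k g = (LEAST n. \<exists>w. set w \<subseteq> bs_gens \<and> length w = n \<and> bs_eval k w = g)"

definition conj_class :: "nat \<Rightarrow> rat \<times> int \<Rightarrow> (rat \<times> int) set" where
  "conj_class k g = {bs_mult k (bs_mult k h g) (bs_inv k h) | h. h \<in> BS k}"

definition class_length :: "nat \<Rightarrow> (rat \<times> int) set \<Rightarrow> nat" where
  "class_length k C = (LEAST n. \<exists>g\<in>C. word_length k g = n)"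

definition c0 :: "nat \<Rightarrow> nat \<Rightarrow> nat" where
  "c0 k n = card {C. (\<exists>x\<in>Zk k. C = conj_class k (x, 0)) \<and> class_length k C = n}"

end

theory Submission
  imports Defs
begin

lemma mult_assoc_bs:
  assumes "k > 0"
  shows "bs_mult k (bs_mult k a b) c = bs_mult k a (bs_mult k b c)"
  using assms by (simp add: bs_mult_def power_int_add algebra_simps)

lemma eval_foldr:
  assumes "k > 0"
  shows "foldr (bs_mult k) u y = bs_mult k (bs_eval k u) y"
proof (induction u)
  case Nil
  then show ?case by (simp add: bs_eval_def bs_mult_def)
next
  case (Cons g u)
  then show ?case using mult_assoc_bs[OF assms] by (simp add: bs_eval_def)
qed

lemma eval_append:
  assumes "k > 0"
  shows "bs_eval k (u @ v) = bs_mult k (bs_eval k u) (bs_eval k v)"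
proof -
  have "bs_eval k (u @ v) = foldr (bs_mult k) u (bs_eval k v)" by (simp add: bs_eval_def)
  then show ?thesis by (simp only: eval_foldr[OF assms])
qed

lemma eval_Cons: "bs_eval k (g # u) = bs_mult k g (bs_eval k u)"
  by (simp add: bs_eval_def)

lemma eval_Nil: "bs_eval k [] = (0,0)"
  by (simp add: bs_eval_def)

lemma eval_rep_a:
  assumes "k > 0"
  shows "bs_eval k (replicate n (s,0)) = (of_nat n * s, 0)"
  by (induction n) (simp_all add: eval_Nil eval_Cons bs_mult_def algebra_simps)

lemma eval_rep_t:
  assumes "k > 0"
  shows "bs_eval k (replicate n (0,s)) = (0, of_nat n * s)"
  by (induction n) (simp_all add: eval_Nil eval_Cons bs_mult_def algebra_simps)

lemma Zk_int: "(of_int a :: rat) \<in> Zk k"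
proof -
  have "(of_int a :: rat) = of_int a / of_nat k ^ 0" by simp
  then show ?thesis unfolding Zk_def by blast
qed

lemma cc_char:
  assumes "k > 0"
  shows "conj_class k (x,0) = {(of_nat k powi m * x, 0) | m. True}"
proof -
  have kk: "(of_nat k :: rat) powi m * of_nat k powi (- m) = 1" for m
    using assms by (simp add: power_int_minus field_simps)
  have M: "bs_mult k (bs_mult k h (x,0)) (bs_inv k h) = (of_nat k powi (snd h) * x, 0)" for h
  proof -
    obtain y m where h: "h = (y,m)" by force
    have "y + of_nat k powi m * x + of_nat k powi m * (- (of_nat k powi (- m)) * y)
        = of_nat k powi m * x" using kk[of m] by (simp add: algebra_simps)
    then show ?thesis by (simp add: h bs_mult_def bs_inv_def)
  qed
  have Z: "(0::rat) \<in> Zk k" using Zk_int[of 0 k] by simp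
  show ?thesis unfolding conj_class_def BS_def
  proof (intro set_eqI iffI)
    fix z :: "rat \<times> int" assume "z \<in> {bs_mult k (bs_mult k h (x, 0)) (bs_inv k h) |h. h \<in> Zk k \<times> UNIV}"
    then obtain h where "z = bs_mult k (bs_mult k h (x, 0)) (bs_inv k h)" by blast
    then show "z \<in> {(rat_of_nat k powi m * x, 0) |m. True}" using M by auto
  next
    fix z :: "rat \<times> int" assume "z \<in> {(rat_of_nat k powi m * x, 0) |m. True}"
    then obtain m where z: "z = (rat_of_nat k powi m * x, 0)" by blast
    have "z = bs_mult k (bs_mult k (0,m) (x, 0)) (bs_inv k (0,m))" using M[of "(0,m)"] z by simp
    then show "z \<in> {bs_mult k (bs_mult k h (x, 0)) (bs_inv k h) |h. h \<in> Zk k \<times> UNIV}"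
      using Z by blast
  qed
qed

lemma powi_shift:
  assumes "k > 0" "h + int lo \<ge> 0"
  shows "(of_nat k :: rat) powi h * of_nat k ^ lo = of_nat k ^ nat (h + int lo)"
proof -
  have "(of_nat k :: rat) powi h * of_nat k ^ lo = of_nat k powi h * of_nat k powi (int lo)" by simp
  also have "\<dots> = of_nat k powi (h + int lo)" using assms by (simp add: power_int_add)
  also have "\<dots> = of_nat k powi (int (nat (h + int lo)))" using assms by simp
  also have "\<dots> = of_nat k ^ nat (h + int lo)" by (simp only: power_int_of_nat)
  finally show ?thesis .
qed

definition inv_walk :: "nat \<Rightarrow> nat \<Rightarrow> rat \<Rightarrow> int \<Rightarrow> bool" where
  "inv_walk k n x h \<longleftrightarrow> (\<exists>lo hi::nat. \<exists>E::nat\<Rightarrow>int. - int lo \<le> h \<and> h \<le> int hi \<and>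
     (\<forall>j>lo+hi. E j = 0) \<and> x * of_nat k ^ lo = of_int (\<Sum>j\<le>lo+hi. E j * int k ^ j) \<and>
     (\<Sum>j\<le>lo+hi. \<bar>E j\<bar>) + 2 * int (lo+hi) \<le> int n + \<bar>h\<bar>)"

lemma step_a:
  assumes k: "k > 0" and I: "inv_walk k n x h" and s: "\<bar>s\<bar> = 1"
  shows "inv_walk k (Suc n) (x + of_nat k powi h * of_int s) h"
proof -
  from I obtain lo hi E where h1: "- int lo \<le> h" and h2: "h \<le> int hi"
    and Ez: "\<forall>j>lo+hi. E j = 0" and X: "x * of_nat k ^ lo = of_int (\<Sum>j\<le>lo+hi. E j * int k ^ j)"
    and C: "(\<Sum>j\<le>lo+hi. \<bar>E j\<bar>) + 2 * int (lo+hi) \<le> int n + \<bar>h\<bar>"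
    unfolding inv_walk_def by blast
  define i where "i = nat (h + int lo)"
  have i: "i \<le> lo + hi" using h1 h2 unfolding i_def by linarith
  define E' where "E' j = E j + (if j = i then s else 0)" for j
  have "(\<Sum>j\<le>lo+hi. E' j * int k ^ j) = (\<Sum>j\<le>lo+hi. E j * int k ^ j) + (\<Sum>j\<le>lo+hi. (if j = i then s * int k ^ j else 0))"
    unfolding E'_def sum.distrib[symmetric] by (rule sum.cong) (auto simp: algebra_simps)
  also have "(\<Sum>j\<le>lo+hi. (if j = i then s * int k ^ j else 0)) = s * int k ^ i"
    using i by (simp add: sum.delta)
  finally have S1: "(\<Sum>j\<le>lo+hi. E' j * int k ^ j) = (\<Sum>j\<le>lo+hi. E j * int k ^ j) + s * int k ^ i" .
  have "(x + of_nat k powi h * of_int s) * of_nat k ^ lo = x * of_nat k ^ lo + of_int s * (of_nat k powi h * of_nat k ^ lo)"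
    by (simp add: algebra_simps)
  also have "\<dots> = of_int (\<Sum>j\<le>lo+hi. E' j * int k ^ j)"
    using powi_shift[OF k, of h lo] h1 X S1 by (simp add: i_def)
  finally have X': "(x + of_nat k powi h * of_int s) * of_nat k ^ lo = of_int (\<Sum>j\<le>lo+hi. E' j * int k ^ j)" .
  have "(\<Sum>j\<le>lo+hi. \<bar>E' j\<bar>) \<le> (\<Sum>j\<le>lo+hi. \<bar>E j\<bar> + (if j = i then 1 else 0))"
    by (rule sum_mono) (simp add: E'_def s abs_triangle_ineq[THEN order_trans])
  also have "\<dots> = (\<Sum>j\<le>lo+hi. \<bar>E j\<bar>) + 1" using i by (simp add: sum.distrib)
  finally have C': "(\<Sum>j\<le>lo+hi. \<bar>E' j\<bar>) \<le> (\<Sum>j\<le>lo+hi. \<bar>E j\<bar>) + 1" .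
  have Ez': "\<forall>j>lo+hi. E' j = 0" using Ez i by (simp add: E'_def)
  show ?thesis unfolding inv_walk_def
    apply (rule exI[of _ lo], rule exI[of _ hi], rule exI[of _ E'])
    using h1 h2 Ez' X' C C' by simp
qed

lemma step_up:
  assumes k: "k > 0" and I: "inv_walk k n x h"
  shows "inv_walk k (Suc n) x (h + 1)"
proof -
  from I obtain lo hi E where h1: "- int lo \<le> h" and h2: "h \<le> int hi"
    and Ez: "\<forall>j>lo+hi. E j = 0" and X: "x * of_nat k ^ lo = of_int (\<Sum>j\<le>lo+hi. E j * int k ^ j)"
    and C: "(\<Sum>j\<le>lo+hi. \<bar>E j\<bar>) + 2 * int (lo+hi) \<le> int n + \<bar>h\<bar>"
    unfolding inv_walk_def by blast
  show ?thesis
  proof (cases "h + 1 \<le> int hi")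
    case True
    show ?thesis unfolding inv_walk_def
      apply (rule exI[of _ lo], rule exI[of _ hi], rule exI[of _ E])
      using True h1 Ez X C by simp
  next
    case False
    then have hh: "h = int hi" using h2 by simp
    have e: "E (Suc (lo + hi)) = 0" using Ez by simp
    have A1: "(\<Sum>j\<le>lo+Suc hi. E j * int k ^ j) = (\<Sum>j\<le>lo+hi. E j * int k ^ j)" using e by simp
    have A2: "(\<Sum>j\<le>lo+Suc hi. \<bar>E j\<bar>) = (\<Sum>j\<le>lo+hi. \<bar>E j\<bar>)" using e by simp
    show ?thesis unfolding inv_walk_def
      apply (rule exI[of _ lo], rule exI[of _ "Suc hi"], rule exI[of _ E])
      using h1 hh Ez X C A1 A2 by auto
  qed
qed

lemma step_down:
  assumes k: "k > 0" and I: "inv_walk k n x h"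
  shows "inv_walk k (Suc n) x (h - 1)"
proof -
  from I obtain lo hi E where h1: "- int lo \<le> h" and h2: "h \<le> int hi"
    and Ez: "\<forall>j>lo+hi. E j = 0" and X: "x * of_nat k ^ lo = of_int (\<Sum>j\<le>lo+hi. E j * int k ^ j)"
    and C: "(\<Sum>j\<le>lo+hi. \<bar>E j\<bar>) + 2 * int (lo+hi) \<le> int n + \<bar>h\<bar>"
    unfolding inv_walk_def by blast
  show ?thesis
  proof (cases "- int lo \<le> h - 1")
    case True
    show ?thesis unfolding inv_walk_def
      apply (rule exI[of _ lo], rule exI[of _ hi], rule exI[of _ E])
      using True h2 Ez X C by simp
  next
    case False
    then have hh: "h = - int lo" using h1 by simp
    define E' where "E' j = (if j = 0 then 0 else E (j - 1))" for j
    have A1: "(\<Sum>j\<le>Suc lo+hi. E' j * int k ^ j) = int k * (\<Sum>j\<le>lo+hi. E j * int k ^ j)"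
      unfolding E'_def by (simp add: sum.atMost_Suc_shift sum_distrib_left algebra_simps del: sum.atMost_Suc)
    have A2: "(\<Sum>j\<le>Suc lo+hi. \<bar>E' j\<bar>) = (\<Sum>j\<le>lo+hi. \<bar>E j\<bar>)"
      unfolding E'_def by (simp add: sum.atMost_Suc_shift del: sum.atMost_Suc)
    have X': "x * of_nat k ^ Suc lo = of_int (\<Sum>j\<le>Suc lo+hi. E' j * int k ^ j)"
      using X A1 by (simp add: algebra_simps)
    have Ez': "\<forall>j>Suc lo+hi. E' j = 0" using Ez by (simp add: E'_def)
    show ?thesis unfolding inv_walk_def
      apply (rule exI[of _ "Suc lo"], rule exI[of _ hi], rule exI[of _ E'])
      using h2 hh Ez' X' C A2 by auto
  qed
qed

lemma walk:
  assumes k: "k > 0" and "set w \<subseteq> bs_gens"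
  shows "inv_walk k (length w) (fst (bs_eval k w)) (snd (bs_eval k w))"
  using assms(2)
proof (induction w rule: rev_induct)
  case Nil
  show ?case unfolding inv_walk_def eval_Nil
    by (intro exI[of _ 0] exI[of _ 0] exI[of _ "\<lambda>_. 0"]) simp
next
  case (snoc g w)
  then have I: "inv_walk k (length w) (fst (bs_eval k w)) (snd (bs_eval k w))" by simp
  have ev: "bs_eval k (w @ [g]) = bs_mult k (bs_eval k w) g"
    using eval_append[OF k] by (simp add: eval_Cons eval_Nil bs_mult_def)
  have "g \<in> bs_gens" using snoc by simp
  then consider "g = (1,0)" | "g = (-1,0)" | "g = (0,1)" | "g = (0,-1)" unfolding bs_gens_def by blast
  then show ?case
  proof cases
    case 1
    show ?thesis using step_a[OF k I, of 1] ev unfolding 1 by (simp add: bs_mult_def)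
  next
    case 2
    show ?thesis using step_a[OF k I, of "-1"] ev unfolding 2 by (simp add: bs_mult_def)
  next
    case 3
    show ?thesis using step_up[OF k I] ev unfolding 3 by (simp add: bs_mult_def)
  next
    case 4
    show ?thesis using step_down[OF k I] ev unfolding 4 by (simp add: bs_mult_def)
  qed
qed

fun lval :: "nat \<Rightarrow> int list \<Rightarrow> int" where
  "lval k [] = 0"
| "lval k (e # es) = e + int k * lval k es"

fun lcost :: "int list \<Rightarrow> nat" where
  "lcost [] = 0"
| "lcost (e # es) = nat \<bar>e\<bar> + 2 + lcost es"

lemma lval_map: "lval k (map E [0..<m]) = (\<Sum>j<m. E j * int k ^ j)"
proof (induction m arbitrary: E)
  case 0 then show ?case by simp
next
  case (Suc m)
  show ?case unfolding map_upt_Suc using Suc[of "\<lambda>i. E (Suc i)"]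
    by (simp add: sum.lessThan_Suc_shift sum_distrib_left algebra_simps del: sum.lessThan_Suc)
qed

lemma lcost_map: "lcost (map E [0..<m]) = (\<Sum>j<m. nat \<bar>E j\<bar>) + 2 * m"
proof (induction m arbitrary: E)
  case 0 then show ?case by simp
next
  case (Suc m)
  show ?case unfolding map_upt_Suc using Suc[of "\<lambda>i. E (Suc i)"]
    by (simp add: sum.lessThan_Suc_shift del: sum.lessThan_Suc)
qed

definition Lset :: "nat \<Rightarrow> int list set" where
  "Lset c = {E. lcost E \<le> c}"

lemma geo_ineq: "1 + (\<Sum>j<Suc m. (19/10::real)^j) + (\<Sum>j<m. (19/10::real)^j) \<le> (19/10)^(m+2)"
proof (induction m)
  case 0 then show ?case by simp
next
  case (Suc m)
  have "1 + (\<Sum>j<Suc (Suc m). (19/10::real)^j) + (\<Sum>j<Suc m. (19/10::real)^j)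
      = (1 + (\<Sum>j<Suc m. (19/10::real)^j) + (\<Sum>j<m. (19/10::real)^j)) + (19/10)^Suc m + (19/10)^m"
    by simp
  also have "\<dots> \<le> (19/10)^(m+2) + (19/10)^Suc m + (19/10)^m" using Suc by simp
  also have "\<dots> = (19/10::real)^m * (361/100 + 19/10 + 1)" by (simp add: algebra_simps power2_eq_square)
  also have "\<dots> \<le> (19/10::real)^m * (6859/1000)" by (intro mult_left_mono) auto
  also have "\<dots> = (19/10)^(Suc m + 2)" by (simp add: power3_eq_cube)
  finally show ?case .
qed

lemma Lset_small: "c < 2 \<Longrightarrow> Lset c = {[]}"
  unfolding Lset_def
  apply (auto)
  subgoal for E by (cases E) auto
  done

lemma Lset_sub:
  assumes "c = m + 2"
  shows "Lset c \<subseteq> insert [] ((\<Union>j\<in>{..m}. (#) (int (m - j)) ` Lset j) \<union> (\<Union>j\<in>{..<m}. (#) (- int (m - j)) ` Lset j))"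
proof
  fix E assume "E \<in> Lset c"
  then have E: "lcost E \<le> c" by (simp add: Lset_def)
  show "E \<in> insert [] ((\<Union>j\<in>{..m}. (#) (int (m - j)) ` Lset j) \<union> (\<Union>j\<in>{..<m}. (#) (- int (m - j)) ` Lset j))"
  proof (cases E)
    case Nil then show ?thesis by simp
  next
    case (Cons e es)
    define j where "j = m - nat \<bar>e\<bar>"
    have c1: "nat \<bar>e\<bar> + 2 + lcost es \<le> m + 2" using E Cons assms by simp
    then have es: "es \<in> Lset j" unfolding j_def Lset_def by simp
    show ?thesis
    proof (cases "e \<ge> 0")
      case True
      then have "e = int (m - j)" "j \<le> m" using c1 unfolding j_def by auto
      then show ?thesis using es Cons by blast
    next
      case False
      then have "e = - int (m - j)" "j < m" using c1 unfolding j_def by auto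
      then show ?thesis using es Cons by blast
    qed
  qed
qed

lemma Lset_bound: "finite (Lset c) \<and> real (card (Lset c)) \<le> (19/10)^c"
proof (induction c rule: less_induct)
  case (less c)
  show ?case
  proof (cases "c < 2")
    case True
    then show ?thesis using Lset_small[OF True] by simp
  next
    case False
    then obtain m where cm: "c = m + 2" by (metis add.commute le_Suc_ex not_less)
    define U where "U = (\<Union>j\<in>{..m}. (#) (int (m - j)) ` Lset j) \<union> (\<Union>j\<in>{..<m}. (#) (- int (m - j)) ` Lset j)"
    have IH: "finite (Lset j) \<and> real (card (Lset j)) \<le> (19/10)^j" if "j \<le> m" for j
      using less that cm by simp
    have fU: "finite U" unfolding U_def using IH by auto
    have sub: "Lset c \<subseteq> insert [] U" using Lset_sub[OF cm] unfolding U_def .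
    have fin: "finite (Lset c)" using sub fU finite_subset by blast
    have "card (Lset c) \<le> card (insert [] U)" using sub fU by (intro card_mono) auto
    also have "\<dots> \<le> Suc (card U)" by (simp add: card_insert_if fU)
    also have "card U \<le> card (\<Union>j\<in>{..m}. (#) (int (m - j)) ` Lset j) + card (\<Union>j\<in>{..<m}. (#) (- int (m - j)) ` Lset j)"
      unfolding U_def by (rule card_Un_le)
    also have "card (\<Union>j\<in>{..m}. (#) (int (m - j)) ` Lset j) \<le> (\<Sum>j\<in>{..m}. card ((#) (int (m - j)) ` Lset j))"
      by (rule card_UN_le) simp
    also have "\<dots> \<le> (\<Sum>j\<in>{..m}. card (Lset j))" by (intro sum_mono card_image_le) (simp add: IH)
    also have "card (\<Union>j\<in>{..<m}. (#) (- int (m - j)) ` Lset j) \<le> (\<Sum>j\<in>{..<m}. card ((#) (- int (m - j)) ` Lset j))"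
      by (rule card_UN_le) simp
    also have "\<dots> \<le> (\<Sum>j\<in>{..<m}. card (Lset j))" by (intro sum_mono card_image_le) (simp add: IH)
    finally have cb: "card (Lset c) \<le> Suc ((\<Sum>j\<in>{..m}. card (Lset j)) + (\<Sum>j\<in>{..<m}. card (Lset j)))"
      by simp
    have "real (card (Lset c)) \<le> 1 + (\<Sum>j\<in>{..m}. real (card (Lset j))) + (\<Sum>j\<in>{..<m}. real (card (Lset j)))"
      using cb by (simp add: of_nat_sum[symmetric] del: of_nat_sum)
    also have "\<dots> \<le> 1 + (\<Sum>j<Suc m. (19/10::real)^j) + (\<Sum>j<m. (19/10::real)^j)"
      unfolding lessThan_Suc_atMost using IH by (intro add_mono sum_mono order.refl) auto
    also have "\<dots> \<le> (19/10)^c" using geo_ineq[of m] cm by simp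
    finally show ?thesis using fin by simp
  qed
qed

lemma cc_mem:
  assumes k: "k > 0"
  shows "z \<in> conj_class k (x,0) \<longleftrightarrow> (\<exists>m. z = (of_nat k powi m * x, 0))"
  unfolding cc_char[OF k] by blast

fun Wd :: "int list \<Rightarrow> (rat \<times> int) list" where
  "Wd [] = []"
| "Wd (e # es) = replicate (nat \<bar>e\<bar>) (of_int (sgn e), 0) @ [(0,1)] @ Wd es @ [(0,-1)]"

lemma rep_sgn_eval:
  assumes k: "k > 0"
  shows "bs_eval k (replicate (nat \<bar>e\<bar>) (of_int (sgn e), 0)) = (of_int e, 0)"
proof -
  have "rat_of_nat (nat \<bar>e\<bar>) * of_int (sgn e) = of_int e"
    by (cases "e > 0"; cases "e < 0") auto
  then show ?thesis using eval_rep_a[OF k] by simp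
qed

lemma rep_sgn_set: "set (replicate (nat \<bar>e\<bar>) (of_int (sgn e) :: rat, 0::int)) \<subseteq> bs_gens"
  by (cases "e > 0"; cases "e < 0") (auto simp: bs_gens_def)

lemma Wd_props:
  assumes k: "k > 0"
  shows "bs_eval k (Wd E) = (of_int (lval k E), 0) \<and> length (Wd E) = lcost E \<and> set (Wd E) \<subseteq> bs_gens"
proof (induction E)
  case Nil then show ?case by (simp add: eval_Nil)
next
  case (Cons e es)
  have ev: "bs_eval k (Wd (e # es)) = bs_mult k (of_int e, 0) (bs_mult k (0,1) (bs_mult k (of_int (lval k es), 0) (0,-1)))"
    using Cons by (simp add: eval_append[OF k] eval_Cons eval_Nil rep_sgn_eval[OF k] bs_mult_def)
  have "bs_eval k (Wd (e # es)) = (of_int (lval k (e # es)), 0)"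
    unfolding ev by (simp add: bs_mult_def)
  moreover have "set (Wd (e # es)) \<subseteq> bs_gens" using Cons rep_sgn_set[of e] by (auto simp: bs_gens_def)
  ultimately show ?case using Cons by simp
qed

definition tw :: "int \<Rightarrow> (rat \<times> int) list" where
  "tw p = replicate (nat p) (0,1) @ replicate (nat (-p)) (0,-1)"

lemma tw_props:
  assumes k: "k > 0"
  shows "bs_eval k (tw p) = (0, p) \<and> set (tw p) \<subseteq> bs_gens"
proof -
  have "bs_eval k (tw p) = bs_mult k (0, int (nat p)) (0, - int (nat (-p)))"
    unfolding tw_def using eval_rep_t[OF k, of "nat p" 1] eval_rep_t[OF k, of "nat (-p)" "-1"]
    by (simp add: eval_append[OF k])
  also have "\<dots> = (0,p)" by (simp add: bs_mult_def)
  finally show ?thesis unfolding tw_def by (auto simp: bs_gens_def)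
qed

lemma word_exists_gen:
  assumes k: "k > 0"
  shows "\<exists>w. set w \<subseteq> bs_gens \<and> bs_eval k w = (of_nat k powi p * of_int a, 0)"
proof -
  define w where "w = tw p @ replicate (nat \<bar>a\<bar>) (of_int (sgn a), 0) @ tw (-p)"
  have "bs_eval k w = bs_mult k (0,p) (bs_mult k (of_int a, 0) (0, -p))"
    unfolding w_def using tw_props[OF k] by (simp add: eval_append[OF k] rep_sgn_eval[OF k])
  also have "\<dots> = (of_nat k powi p * of_int a, 0)" by (simp add: bs_mult_def)
  finally have "bs_eval k w = (of_nat k powi p * of_int a, 0)" .
  moreover have "set w \<subseteq> bs_gens" using tw_props[OF k, of p] tw_props[OF k, of "-p"] rep_sgn_set[of a]
    unfolding w_def by auto
  ultimately show ?thesis by blast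
qed

lemma word_exists:
  assumes k: "k > 0" and x: "x \<in> Zk k" and g: "g \<in> conj_class k (x,0)"
  shows "\<exists>w. set w \<subseteq> bs_gens \<and> bs_eval k w = g"
proof -
  obtain a j where xa: "x = of_int a / of_nat k ^ j" using x unfolding Zk_def by blast
  obtain m where gm: "g = (of_nat k powi m * x, 0)" using g cc_mem[OF k] by blast
  have "of_nat k powi m * x = of_nat k powi (m - int j) * of_int a"
    unfolding xa using k by (simp add: power_int_diff field_simps)
  then show ?thesis using word_exists_gen[OF k, of "m - int j" a] gm by simp
qed

lemma wl_le: "set w \<subseteq> bs_gens \<Longrightarrow> bs_eval k w = g \<Longrightarrow> word_length k g \<le> length w"
  unfolding word_length_def by (rule Least_le) blast

lemma wl_attained:
  assumes "\<exists>w. set w \<subseteq> bs_gens \<and> bs_eval k w = g"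
  shows "\<exists>w. set w \<subseteq> bs_gens \<and> length w = word_length k g \<and> bs_eval k w = g"
proof -
  from assms obtain w where "set w \<subseteq> bs_gens \<and> bs_eval k w = g" by blast
  then have "\<exists>n w. set w \<subseteq> bs_gens \<and> length w = n \<and> bs_eval k w = g" by blast
  then show ?thesis unfolding word_length_def by (rule LeastI_ex)
qed

lemma cl_le: "g \<in> C \<Longrightarrow> class_length k C \<le> word_length k g"
  unfolding class_length_def by (rule Least_le) blast

lemma cl_attained: "g \<in> C \<Longrightarrow> \<exists>g\<in>C. word_length k g = class_length k C"
  unfolding class_length_def by (rule LeastI_ex) blast

lemma cc_same:
  assumes k: "k > 0" and y: "(y,0) \<in> conj_class k (x,0)"
  shows "conj_class k (y,0) = conj_class k (x,0)"
proof -
  obtain m where ym: "y = of_nat k powi m * x" using y cc_mem[OF k] by blast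
  have kk: "(of_nat k :: rat) powi p * of_nat k powi m = of_nat k powi (p + m)" for p
    using k by (simp add: power_int_add)
  have "{(of_nat k powi p * y, 0) | p. True} = {(of_nat k powi p * x, 0::int) | p. True}"
  proof (intro set_eqI iffI)
    fix z :: "rat \<times> int" assume "z \<in> {(of_nat k powi p * y, 0) | p. True}"
    then obtain p where "z = (of_nat k powi p * y, 0)" by blast
    then have "z = (of_nat k powi (p + m) * x, 0)" using kk[of p] ym by (simp add: mult.assoc[symmetric])
    then show "z \<in> {(of_nat k powi p * x, 0::int) | p. True}" by blast
  next
    fix z :: "rat \<times> int" assume "z \<in> {(of_nat k powi p * x, 0) | p. True}"
    then obtain p where "z = (of_nat k powi p * x, 0)" by blast
    then have "z = (of_nat k powi (p - m) * y, 0)" using kk[of "p - m"] ym by (simp add: mult.assoc[symmetric])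
    then show "z \<in> {(of_nat k powi p * y, 0::int) | p. True}" by blast
  qed
  then show ?thesis using cc_char[OF k, of x] cc_char[OF k, of y] by simp
qed

lemma arith_aux: "int (a::nat) = b \<Longrightarrow> b + 2 * int d \<le> int c \<Longrightarrow> c \<le> n \<Longrightarrow> a + 2 * Suc d \<le> n + 2"
  by presburger

lemma key:
  assumes k: "k > 0" and x: "x \<in> Zk k" and cl: "class_length k (conj_class k (x,0)) \<le> n"
  shows "\<exists>N \<in> lval k ` Lset (n+2). (of_int N, 0) \<in> conj_class k (x,0)"
proof -
  have "(x,0) \<in> conj_class k (x,0)" using cc_mem[OF k, of "(x,0)" x] by (metis mult_1 power_int_0_right)
  then obtain g where g: "g \<in> conj_class k (x,0)" and gl: "word_length k g = class_length k (conj_class k (x,0))"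
    using cl_attained by blast
  obtain w where w: "set w \<subseteq> bs_gens" "length w = word_length k g" "bs_eval k w = g"
    using wl_attained[OF word_exists[OF k x g]] by blast
  obtain m where gm: "g = (of_nat k powi m * x, 0)" using g cc_mem[OF k] by blast
  have "inv_walk k (length w) (of_nat k powi m * x) 0" using walk[OF k w(1)] w(3) gm by simp
  then obtain lo hi E where
        X: "(of_nat k powi m * x) * of_nat k ^ lo = of_int (\<Sum>j\<le>lo+hi. E j * int k ^ j)"
    and C: "(\<Sum>j\<le>lo+hi. \<bar>E j\<bar>) + 2 * int (lo+hi) \<le> int (length w)"
    unfolding inv_walk_def by auto
  define L where "L = map E [0..<Suc (lo+hi)]"
  have LV: "lval k L = (\<Sum>j\<le>lo+hi. E j * int k ^ j)"
    unfolding L_def lval_map lessThan_Suc_atMost ..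
  have LC: "lcost L = (\<Sum>j\<le>lo+hi. nat \<bar>E j\<bar>) + 2 * Suc (lo+hi)"
    unfolding L_def lcost_map lessThan_Suc_atMost ..
  have "int (\<Sum>j\<le>lo+hi. nat \<bar>E j\<bar>) = (\<Sum>j\<le>lo+hi. \<bar>E j\<bar>)" by (simp add: of_nat_sum)
  moreover have "length w \<le> n" using w(2) gl cl by simp
  ultimately have "lcost L \<le> n + 2" unfolding LC using C arith_aux by blast
  then have mem: "lval k L \<in> lval k ` Lset (n+2)" unfolding Lset_def by blast
  have pw: "of_nat k powi (m + int lo) * x = of_nat k powi m * x * (of_nat k ^ lo :: rat)"
    using k by (simp add: power_int_add mult_ac)
  have "(of_int (lval k L) :: rat) = of_nat k powi (m + int lo) * x"
    unfolding pw X LV ..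
  then have "(of_int (lval k L), 0) \<in> conj_class k (x,0)" using cc_mem[OF k] by blast
  then show ?thesis using mem by blast
qed

definition Bset :: "nat \<Rightarrow> nat \<Rightarrow> (rat \<times> int) set set" where
  "Bset k n = {C. (\<exists>x\<in>Zk k. C = conj_class k (x, 0)) \<and> class_length k C \<le> n}"

lemma B_upper:
  assumes k: "k > 0"
  shows "finite (Bset k n) \<and> card (Bset k n) \<le> card (Lset (n+2))"
proof -
  define f where "f (C :: (rat \<times> int) set) = (SOME N. N \<in> lval k ` Lset (n+2) \<and> (of_int N, 0) \<in> C)" for C
  have fP: "f C \<in> lval k ` Lset (n+2) \<and> (of_int (f C), 0) \<in> C" if "C \<in> Bset k n" for C
  proof -
    from that obtain x where x: "x \<in> Zk k" "C = conj_class k (x,0)" "class_length k C \<le> n"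
      unfolding Bset_def by blast
    then have "\<exists>N. N \<in> lval k ` Lset (n+2) \<and> (of_int N, 0) \<in> C" using key[OF k x(1)] by blast
    then show ?thesis unfolding f_def by (rule someI_ex)
  qed
  have inj: "inj_on f (Bset k n)"
  proof (rule inj_onI)
    fix C C' assume C: "C \<in> Bset k n" and C': "C' \<in> Bset k n" and eq: "f C = f C'"
    obtain x where x: "C = conj_class k (x,0)" using C unfolding Bset_def by blast
    obtain x' where x': "C' = conj_class k (x',0)" using C' unfolding Bset_def by blast
    have "conj_class k (of_int (f C), 0) = C" using cc_same[OF k] fP[OF C] x by simp
    moreover have "conj_class k (of_int (f C), 0) = C'" using cc_same[OF k] fP[OF C'] x' eq by simp
    ultimately show "C = C'" by simp
  qed
  have fin: "finite (Lset (n+2))" using Lset_bound by blast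
  have sub: "f ` Bset k n \<subseteq> lval k ` Lset (n+2)" using fP by blast
  have finB: "finite (Bset k n)" using inj_on_finite[OF inj sub] fin by blast
  have "card (Bset k n) = card (f ` Bset k n)" using inj by (simp add: card_image)
  also have "\<dots> \<le> card (lval k ` Lset (n+2))" using sub fin by (intro card_mono) auto
  also have "\<dots> \<le> card (Lset (n+2))" by (rule card_image_le[OF fin])
  finally show ?thesis using finB by simp
qed

lemma c0_upper:
  assumes k: "k > 0"
  shows "real (c0 k n) \<le> (19/10) ^ (n+2)"
proof -
  have sub: "{C. (\<exists>x\<in>Zk k. C = conj_class k (x, 0)) \<and> class_length k C = n} \<subseteq> Bset k n"
    unfolding Bset_def by auto
  have "c0 k n \<le> card (Bset k n)" unfolding c0_def using B_upper[OF k] sub by (intro card_mono) auto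
  also have "\<dots> \<le> card (Lset (n+2))" using B_upper[OF k] by blast
  finally have "real (c0 k n) \<le> real (card (Lset (n+2)))" by simp
  also have "\<dots> \<le> (19/10)^(n+2)" using Lset_bound by blast
  finally show ?thesis .
qed

lemma B_sum:
  "card (Bset k n) \<le> (\<Sum>i\<le>n. c0 k i)"
proof -
  have "Bset k n = (\<Union>i\<in>{..n}. {C. (\<exists>x\<in>Zk k. C = conj_class k (x, 0)) \<and> class_length k C = i})"
    unfolding Bset_def by auto
  then show ?thesis unfolding c0_def by (simp add: card_UN_le)
qed

lemma lval_uniq:
  assumes k: "k \<ge> 3"
  shows "length es1 = length es2 \<Longrightarrow> set es1 \<subseteq> {-1,0,1} \<Longrightarrow> set es2 \<subseteq> {-1,0,1}
     \<Longrightarrow> lval k es1 = lval k es2 \<Longrightarrow> es1 = es2"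
proof (induction es1 es2 rule: list_induct2)
  case Nil then show ?case by simp
next
  case (Cons e1 es1 e2 es2)
  have eq: "e1 - e2 = int k * (lval k es2 - lval k es1)" using Cons.prems by (simp add: algebra_simps)
  have "\<bar>e1 - e2\<bar> \<le> 2" using Cons.prems by auto
  have v: "lval k es2 = lval k es1"
  proof (rule ccontr)
    assume "lval k es2 \<noteq> lval k es1"
    then have "\<bar>lval k es2 - lval k es1\<bar> \<ge> 1" by simp
    then have "int k * \<bar>lval k es2 - lval k es1\<bar> \<ge> int k * 1" by (intro mult_left_mono) auto
    then have "\<bar>e1 - e2\<bar> \<ge> int k" using eq by (simp add: abs_mult)
    then show False using \<open>\<bar>e1 - e2\<bar> \<le> 2\<close> k by linarith
  qed
  then have "e1 = e2" using eq by simp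
  then show ?case using Cons v by simp
qed

lemma nodiv: "k \<ge> 2 \<Longrightarrow> \<not> int k dvd lval k (1 # es)"
proof
  assume k: "k \<ge> 2" and d: "int k dvd lval k (1 # es)"
  then have "int k dvd 1 + int k * lval k es" by simp
  then have "int k dvd (1 + int k * lval k es) - int k * lval k es" by (intro dvd_diff) auto
  then have "int k dvd 1" by simp
  then show False using k by simp
qed

lemma pow_int_eq0:
  assumes "(of_int N2 :: rat) = of_nat k ^ j * of_int N1" "\<not> int k dvd N2"
  shows "j = 0"
proof (rule ccontr)
  assume "j \<noteq> 0"
  have "(of_int N2 :: rat) = of_int (int k ^ j * N1)" using assms(1) by simp
  then have "N2 = int k ^ j * N1" by (simp only: of_int_eq_iff)
  then have "int k dvd N2" using \<open>j \<noteq> 0\<close> by (simp add: dvd_power)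
  then show False using assms(2) by simp
qed

lemma cc_int_eq:
  assumes k: "k > 0" and m: "(of_int N2 :: rat) = of_nat k powi m * of_int N1"
    and d1: "\<not> int k dvd N1" and d2: "\<not> int k dvd N2"
  shows "N1 = N2"
proof (cases "m \<ge> 0")
  case True
  then have "(of_int N2 :: rat) = of_nat k ^ nat m * of_int N1" using m
    by (simp add: power_int_def)
  then have "nat m = 0" using pow_int_eq0 d2 by blast
  then show ?thesis using m True by simp
next
  case False
  have "(of_nat k :: rat) powi (- m) * of_nat k powi m = 1" using k by (simp add: power_int_minus)
  then have "(of_int N1 :: rat) = of_nat k powi (-m) * of_int N2" using m by (simp add: algebra_simps)
  also have "(of_nat k :: rat) powi (-m) = of_nat k ^ nat (-m)" using False
    by (simp add: power_int_def)
  finally have "nat (-m) = 0" using pow_int_eq0 d1 by blast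
  then show ?thesis using False by simp
qed

lemma lcost_le: "set es \<subseteq> {-1,0,1} \<Longrightarrow> lcost es \<le> 3 * length es"
  by (induction es) auto

lemma B_lower:
  assumes k: "k \<ge> 3" and n: "3 * m + 3 \<le> n"
  shows "3 ^ m \<le> card (Bset k n)"
proof -
  have k0: "k > 0" using k by simp
  define ES where "ES = {es. set es \<subseteq> {-1,0,1::int} \<and> length es = m}"
  define \<phi> where "\<phi> es = conj_class k (of_int (lval k (1 # es)), 0)" for es
  have cES: "card ES = 3 ^ m" unfolding ES_def by (subst card_lists_length_eq) (auto simp: numeral_3_eq_3)
  have fB: "finite (Bset k n)" using B_upper[OF k0] by blast
  have into: "\<phi> ` ES \<subseteq> Bset k n"
  proof
    fix C assume "C \<in> \<phi> ` ES"
    then obtain es where es: "es \<in> ES" and C: "C = \<phi> es" by blast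
    let ?x = "(of_int (lval k (1 # es)) :: rat)"
    have W: "bs_eval k (Wd (1 # es)) = (?x, 0)" "length (Wd (1 # es)) = lcost (1 # es)"
        "set (Wd (1 # es)) \<subseteq> bs_gens" using Wd_props[OF k0] by blast+
    have mem: "(?x, 0) \<in> C" unfolding C \<phi>_def using cc_mem[OF k0, of "(?x,0)" ?x]
      by (metis mult_1 power_int_0_right)
    have "class_length k C \<le> word_length k (?x, 0)" using cl_le[OF mem] .
    also have "\<dots> \<le> lcost (1 # es)" using wl_le[OF W(3) W(1)] W(2) by simp
    also have "\<dots> \<le> n" using lcost_le[of es] es n unfolding ES_def by simp
    finally show "C \<in> Bset k n" unfolding Bset_def C \<phi>_def using Zk_int by blast
  qed
  have inj: "inj_on \<phi> ES"
  proof (rule inj_onI)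
    fix es1 es2 assume e1: "es1 \<in> ES" and e2: "es2 \<in> ES" and eq: "\<phi> es1 = \<phi> es2"
    let ?N1 = "lval k (1 # es1)" and ?N2 = "lval k (1 # es2)"
    have "((of_int ?N2 :: rat), 0) \<in> \<phi> es2" unfolding \<phi>_def using cc_mem[OF k0, of "(of_int ?N2,0)" "of_int ?N2"]
      by (metis mult_1 power_int_0_right)
    then have "((of_int ?N2 :: rat), 0) \<in> \<phi> es1" using eq by simp
    then obtain p where "(of_int ?N2 :: rat) = of_nat k powi p * of_int ?N1"
      unfolding \<phi>_def using cc_mem[OF k0] by blast
    moreover have k2: "k \<ge> 2" using k by simp
    ultimately have "?N1 = ?N2" using cc_int_eq[OF k0] nodiv[OF k2] by blast
    then have "lval k es1 = lval k es2" using k by simp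
    then show "es1 = es2" using lval_uniq[OF k] e1 e2 unfolding ES_def by simp
  qed
  have "card ES = card (\<phi> ` ES)" using inj by (simp add: card_image)
  also have "\<dots> \<le> card (Bset k n)" by (rule card_mono[OF fB into])
  finally show ?thesis using cES by simp
qed

lemma geo_sum_bound: "(\<Sum>i\<le>n. (7/5::real)^i) \<le> 5/2 * (7/5)^(n+1)"
  by (induction n) (simp_all add: algebra_simps)

lemma limsup_upper:
  fixes a :: "nat \<Rightarrow> real"
  assumes nn: "\<And>n. a n \<ge> 0" and ub: "\<And>n. a n \<le> (19/10)^(n+2)"
  shows "limsup (\<lambda>n. ereal (root n (a n))) \<le> ereal (19/10)"
proof -
  have ev: "eventually (\<lambda>n. ereal (root n (a n)) \<le> ereal (19/10 * root n ((19/10)^2))) sequentially"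
    using eventually_gt_at_top[of 0]
  proof eventually_elim
    case (elim n)
    have "root n (a n) \<le> root n ((19/10)^(n+2))" using ub elim by (simp add: real_root_le_iff)
    also have "\<dots> = root n ((19/10)^n) * root n ((19/10)^2)" by (simp only: power_add real_root_mult)
    also have "root n ((19/10::real)^n) = 19/10" by (rule real_root_power_cancel) (simp_all add: elim)
    finally show ?case by simp
  qed
  have lim: "(\<lambda>n. ereal (19/10 * root n ((19/10::real)^2))) \<longlonglongrightarrow> ereal (19/10 * 1)"
    by (intro tendsto_intros LIMSEQ_root_const) simp
  have "limsup (\<lambda>n. ereal (root n (a n))) \<le> limsup (\<lambda>n. ereal (19/10 * root n ((19/10)^2)))"
    by (rule Limsup_mono[OF ev])
  also have "\<dots> = ereal (19/10)" using lim_imp_Limsup[OF _ lim] by simp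
  finally show ?thesis .
qed

lemma limsup_lower:
  fixes a :: "nat \<Rightarrow> real"
  assumes nn: "\<And>n. a n \<ge> 0" and lb: "\<And>j. 3 ^ j \<le> (\<Sum>i\<le>3*j+3. a i)"
  shows "ereal (7/5) \<le> limsup (\<lambda>n. ereal (root n (a n)))"
proof (rule ccontr)
  assume "\<not> ?thesis"
  then have "limsup (\<lambda>n. ereal (root n (a n))) < ereal (7/5)" by simp
  then have "eventually (\<lambda>n. ereal (root n (a n)) < ereal (7/5)) sequentially" by (rule Limsup_lessD)
  then obtain N0 where N0: "\<And>n. n \<ge> N0 \<Longrightarrow> root n (a n) < 7/5" by (auto simp: eventually_sequentially)
  define M where "M = max N0 1"
  define A0 where "A0 = (\<Sum>i<M. a i)"
  have A0: "A0 \<ge> 0" unfolding A0_def using nn by (simp add: sum_nonneg)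
  have pt: "a i \<le> (if i < M then a i else 0) + (7/5)^i" for i
  proof (cases "i < M")
    case True then show ?thesis by simp
  next
    case False
    then have i: "i \<ge> N0" "i > 0" unfolding M_def by auto
    have r: "root i ((7/5::real)^i) = 7/5" by (rule real_root_power_cancel) (simp_all add: i(2))
    have "root i (a i) < root i ((7/5)^i)" using N0[OF i(1)] unfolding r .
    then have "a i < (7/5)^i" by (simp only: real_root_less_iff[OF i(2)])
    then show ?thesis using False by simp
  qed
  have S: "(\<Sum>i\<le>n. a i) \<le> A0 + 5/2 * (7/5)^(n+1)" for n
  proof -
    have "(\<Sum>i\<le>n. a i) \<le> (\<Sum>i\<le>n. (if i < M then a i else 0)) + (\<Sum>i\<le>n. (7/5::real)^i)"
      using pt by (simp add: sum.distrib[symmetric] sum_mono)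
    also have "(\<Sum>i\<le>n. (if i < M then a i else 0)) = (\<Sum>i\<in>{..n} \<inter> {..<M}. a i)"
      by (simp add: sum.inter_restrict)
    also have "\<dots> \<le> A0" unfolding A0_def using nn by (intro sum_mono2) auto
    finally show ?thesis using geo_sum_bound[of n] by linarith
  qed
  define q where "q = (343/125::real)"
  define D where "D = A0 + 5/2 * (7/5)^4"
  obtain j where j: "D < (375/343)^j" using real_arch_pow[of "375/343" D] by auto
  have "(3::real)^j \<le> A0 + 5/2 * (7/5)^(3*j+3+1)" using lb[of j] S[of "3*j+3"] by linarith
  also have "(7/5::real)^(3*j+3+1) = (7/5)^4 * q^j"
  proof -
    have q3: "(7/5::real)^3 = q" unfolding q_def by (simp add: power3_eq_cube)
    have e: "3*j+3+1 = 4 + 3*j" by simp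
    have "(7/5::real)^(3*j+3+1) = (7/5)^4 * ((7/5)^3)^j"
      unfolding e power_add power_mult ..
    then show ?thesis unfolding q3 .
  qed
  also have "A0 + 5/2 * ((7/5)^4 * q^j) \<le> D * q^j"
  proof -
    have "q^j \<ge> 1" unfolding q_def by (rule one_le_power) simp
    then have "A0 \<le> A0 * q^j" using A0 by (simp add: mult_le_cancel_left1)
    then show ?thesis unfolding D_def by (simp add: algebra_simps)
  qed
  finally have "(375/343)^j * q^j \<le> D * q^j" unfolding q_def by (simp add: power_mult_distrib[symmetric])
  then have "(375/343)^j \<le> D" unfolding q_def by simp
  then show False using j by simp
qed

theorem corollary3p7:
  fixes r k :: nat
  assumes "r \<ge> 2" and "k = 2 * r"
  shows "ereal (4/3) < limsup (\<lambda>n. ereal (root n (real (c0 k n))))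
       \<and> limsup (\<lambda>n. ereal (root n (real (c0 k n)))) < ereal 2"
proof -
  have k3: "k \<ge> 3" and k0: "k > 0" using assms by auto
  have up: "limsup (\<lambda>n. ereal (root n (real (c0 k n)))) \<le> ereal (19/10)"
    by (rule limsup_upper) (simp, rule c0_upper[OF k0])
  have lb: "3 ^ j \<le> (\<Sum>i\<le>3*j+3. real (c0 k i))" for j
  proof -
    have "3 ^ j \<le> card (Bset k (3*j+3))" using B_lower[OF k3, of j "3*j+3"] by simp
    also have "\<dots> \<le> (\<Sum>i\<le>3*j+3. c0 k i)" by (rule B_sum)
    finally have "real (3 ^ j) \<le> real (\<Sum>i\<le>3*j+3. c0 k i)" by (simp only: of_nat_le_iff)
    then show ?thesis by simp
  qed
  have low: "ereal (7/5) \<le> limsup (\<lambda>n. ereal (root n (real (c0 k n))))"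
    by (rule limsup_lower) (simp_all add: lb)
  have "ereal (4/3) < ereal (7/5)" by simp
  moreover have "ereal (19/10) < ereal 2" by simp
  ultimately show ?thesis using up low by (meson less_le_trans le_less_trans)
qed

end
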